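(* For every $\to$-formula $H$, $\mathbf{CL7}\vdash H$ if and only if $H$ is a substitutional instance of a binary tautology of classical propositional logic.
   Context: Formulas ("$\to$-formulas") are built from infinitely many propositional atoms using only the binary connective $\to$. A $\to$-sequent is a pair $\Gamma\Rightarrow F$ where $\Gamma$ is a finite multiset of $\to$-formulas and $F$ is a $\to$-formula. The system $\mathbf{CL7}$ has as axioms all sequents of the form $\Gamma, F\Rightarrow F$ and exactly two inference rules: Right $\to$: from $\Gamma,E\Rightarrow F$ infer $\Gamma\Rightarrow E\to F$; Left $\to$: from $\Gamma,F\Rightarrow G$ and $\Delta\Rightarrow E$ infer $\Gamma,\Delta,E\to F\Rightarrow G$. (There is no contraction rule; this is the implicative fragment of affine logic.) A formula $H$ is provable in $\mathbf{CL7}$ iff the sequent $\Rightarrow H$ (empty antecedent) is derivable. A formula of classical propositional logic is binary if no atom occurs in it more than twice; a tautology is a classically valid formula. A substitutional instance of $F$ is the result of replacing atoms of $F$ by arbitrary formulas, with all occurrences of the same atom replaced by the same formula. *)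

theory Defs
  imports Main "HOL-Library.Multiset"
begin

datatype fm = Atom nat | Imp fm fm (infixr "\<^bold>\<rightarrow>" 55)

text \<open>The sequent calculus CL7 (affine implicational logic), antecedents are multisets.\<close>
inductive CL7 :: "fm multiset \<Rightarrow> fm \<Rightarrow> bool" where
  Ax: "CL7 (add_mset F \<Gamma>) F"
| ImpR: "CL7 (add_mset E \<Gamma>) F \<Longrightarrow> CL7 \<Gamma> (E \<^bold>\<rightarrow> F)"
| ImpL: "CL7 (add_mset F \<Gamma>) G \<Longrightarrow> CL7 \<Delta> E \<Longrightarrow> CL7 (add_mset (E \<^bold>\<rightarrow> F) (\<Gamma> + \<Delta>)) G"

definition provable_CL7 :: "fm \<Rightarrow> bool" where
  "provable_CL7 H \<longleftrightarrow> CL7 {#} H"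

fun eval :: "(nat \<Rightarrow> bool) \<Rightarrow> fm \<Rightarrow> bool" where
  "eval v (Atom p) = v p"
| "eval v (A \<^bold>\<rightarrow> B) = (eval v A \<longrightarrow> eval v B)"

definition tautology :: "fm \<Rightarrow> bool" where
  "tautology F \<longleftrightarrow> (\<forall>v. eval v F)"

fun atom_occs :: "fm \<Rightarrow> nat multiset" where
  "atom_occs (Atom p) = {#p#}"
| "atom_occs (A \<^bold>\<rightarrow> B) = atom_occs A + atom_occs B"

definition binary :: "fm \<Rightarrow> bool" where
  "binary F \<longleftrightarrow> (\<forall>p. count (atom_occs F) p \<le> 2)"

fun subst :: "(nat \<Rightarrow> fm) \<Rightarrow> fm \<Rightarrow> fm" where
  "subst \<sigma> (Atom p) = \<sigma> p"
| "subst \<sigma> (A \<^bold>\<rightarrow> B) = subst \<sigma> A \<^bold>\<rightarrow> subst \<sigma> B"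

definition subst_instance :: "fm \<Rightarrow> fm \<Rightarrow> bool" where
  "subst_instance H F \<longleftrightarrow> (\<exists>\<sigma>. H = subst \<sigma> F)"

end

theory Submission
  imports Defs
begin

fun head :: "fm \<Rightarrow> nat" where
  "head (Atom p) = p"
| "head (A \<^bold>\<rightarrow> B) = head B"

definition occs :: "fm multiset \<Rightarrow> nat multiset" where
  "occs M = sum_mset (image_mset atom_occs M)"

lemma occs_simps[simp]: "occs {#} = {#}" "occs (add_mset x M) = atom_occs x + occs M"
  "occs (M + N) = occs M + occs N"
  by (auto simp: occs_def)

lemma occs_mono: "M \<subseteq># N \<Longrightarrow> occs M \<subseteq># occs N"
proof -
  assume "M \<subseteq># N"
  then have "N = M + (N - M)" by simp
  then have "occs N = occs M + occs (N - M)" by (metis occs_simps(3))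
  then show ?thesis by simp
qed

lemma occs_mem: "G \<in># M \<Longrightarrow> a \<in># atom_occs G \<Longrightarrow> a \<in># occs M"
proof -
  assume "G \<in># M" "a \<in># atom_occs G"
  then have "M = add_mset G (M - {#G#})" by simp
  then have "occs M = atom_occs G + occs (M - {#G#})" by (metis occs_simps(2))
  then show ?thesis using \<open>a \<in># atom_occs G\<close> by simp
qed

definition binseq :: "fm multiset \<Rightarrow> fm \<Rightarrow> bool" where
  "binseq \<Gamma> X \<longleftrightarrow> (\<forall>a. count (occs \<Gamma> + atom_occs X) a \<le> 2)"

definition sval :: "fm multiset \<Rightarrow> fm \<Rightarrow> bool" where
  "sval \<Gamma> X \<longleftrightarrow> (\<forall>v. (\<forall>G\<in>#\<Gamma>. eval v G) \<longrightarrow> eval v X)"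

lemma head_in: "head F \<in># atom_occs F"
  by (induction F) auto

lemma head_true: "v (head F) \<Longrightarrow> eval v F"
  by (induction F) auto

lemma eval_agree: "(\<forall>a\<in>#atom_occs F. v a = w a) \<Longrightarrow> eval v F = eval w F"
  by (induction F) auto

lemma soundness: "CL7 \<Gamma> X \<Longrightarrow> sval \<Gamma> X"
proof (induction rule: CL7.induct)
  case (ImpL F \<Gamma> G \<Delta> E)
  show ?case unfolding sval_def
  proof (intro allI impI)
    fix v assume a: "\<forall>H\<in>#add_mset (E \<^bold>\<rightarrow> F) (\<Gamma> + \<Delta>). eval v H"
    then have "eval v E" using ImpL(4) unfolding sval_def by auto
    then have "eval v F" using a by auto
    then show "eval v G" using ImpL(3) a unfolding sval_def by auto
  qed
qed (auto simp: sval_def)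

lemma subst_closed: "CL7 \<Gamma> X \<Longrightarrow> CL7 (image_mset (subst \<sigma>) \<Gamma>) (subst \<sigma> X)"
proof (induction rule: CL7.induct)
  case (Ax F \<Gamma>) then show ?case by (simp add: CL7.Ax)
next
  case (ImpR E \<Gamma> F) then show ?case by (simp add: CL7.ImpR)
next
  case (ImpL F \<Gamma> G \<Delta> E)
  have "CL7 (add_mset (subst \<sigma> F) (image_mset (subst \<sigma>) \<Gamma>)) (subst \<sigma> G)" using ImpL(3) by simp
  from CL7.ImpL[OF this ImpL(4)] show ?case by simp
qed

lemma weaken: "CL7 \<Gamma> X \<Longrightarrow> CL7 (\<Gamma> + \<Theta>) X"
proof (induction rule: CL7.induct)
  case (Ax F \<Gamma>) then show ?case by (simp add: CL7.Ax)
next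
  case (ImpR E \<Gamma> F) then show ?case by (simp add: CL7.ImpR)
next
  case (ImpL F \<Gamma> G \<Delta> E)
  have "CL7 (add_mset F (\<Gamma> + \<Theta>)) G" using ImpL(3) by simp
  from CL7.ImpL[OF this ImpL(2)]
  have "CL7 (add_mset (E \<^bold>\<rightarrow> F) ((\<Gamma> + \<Theta>) + \<Delta>)) G" .
  then show ?case by (simp add: ac_simps)
qed

lemma exists_minimal: "P (M::'a multiset) \<Longrightarrow> \<exists>N. N \<subseteq># M \<and> P N \<and> (\<forall>N'. N' \<subset># N \<longrightarrow> \<not> P N')"
proof (induction M rule: measure_induct_rule[of size])
  case (less M)
  show ?case
  proof (cases "\<forall>N'. N' \<subset># M \<longrightarrow> \<not> P N'")
    case True then show ?thesis using less by auto
  next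
    case False
    then obtain N' where "N' \<subset># M" "P N'" by auto
    then obtain N where "N \<subseteq># N'" "P N" "\<forall>N''. N'' \<subset># N \<longrightarrow> \<not> P N''"
      using less(1)[of N'] mset_subset_size by blast
    moreover have "N \<subseteq># M" using \<open>N \<subseteq># N'\<close> \<open>N' \<subset># M\<close> by simp
    ultimately show ?thesis by blast
  qed
qed

lemma minimal_heads:
  assumes val: "sval (\<Theta> + \<Delta>1) X" and min: "\<forall>N'. N' \<subset># \<Delta>1 \<longrightarrow> \<not> sval (\<Theta> + N') X"
    and K: "K \<subseteq># \<Delta>1" "K \<noteq> {#}"
  shows "\<exists>D\<in>#K. head D \<in># occs (\<Theta> + (\<Delta>1 - K)) + atom_occs X"
proof (rule ccontr)
  assume H: "\<not> ?thesis"
  have "\<Delta>1 = K + (\<Delta>1 - K)" using K by simp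
  then have "\<Delta>1 - K \<noteq> \<Delta>1" using K(2) by (metis add_cancel_left_left)
  then have "\<Delta>1 - K \<subset># \<Delta>1" by (simp add: subset_mset.less_le)
  then have "\<not> sval (\<Theta> + (\<Delta>1 - K)) X" using min by blast
  then obtain v where v1: "\<forall>G\<in>#\<Theta> + (\<Delta>1 - K). eval v G" and v2: "\<not> eval v X"
    unfolding sval_def by blast
  define S where "S = head ` set_mset K"
  define w where "w = (\<lambda>a. a \<in> S \<or> v a)"
  have agree: "eval w G = eval v G" if "\<forall>a\<in>#atom_occs G. a \<notin> S" for G
  proof -
    have "\<forall>a\<in>#atom_occs G. w a = v a" using that unfolding w_def by blast
    then show ?thesis by (rule eval_agree)
  qed
  have "\<forall>G\<in>#\<Theta> + (\<Delta>1 - K). eval w G"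
  proof
    fix G assume G: "G \<in># \<Theta> + (\<Delta>1 - K)"
    have "\<forall>a\<in>#atom_occs G. a \<notin> S"
    proof (intro ballI notI)
      fix a assume a: "a \<in># atom_occs G" "a \<in> S"
      then obtain D where D: "D \<in># K" "a = head D" unfolding S_def by blast
      have "a \<in># occs (\<Theta> + (\<Delta>1 - K))" using occs_mem[OF G a(1)] .
      then show False using H D by auto
    qed
    then show "eval w G" using agree v1 G by blast
  qed
  moreover have "\<forall>G\<in>#K. eval w G"
  proof
    fix G assume "G \<in># K"
    then have "w (head G)" unfolding w_def S_def by blast
    then show "eval w G" by (rule head_true)
  qed
  moreover have "\<Delta>1 = K + (\<Delta>1 - K)" using K by simp
  ultimately have "\<forall>G\<in>#\<Theta> + \<Delta>1. eval w G"
  proof -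
    assume a1: "\<forall>G\<in>#\<Theta> + (\<Delta>1 - K). eval w G" and a2: "\<forall>G\<in>#K. eval w G"
      and a3: "\<Delta>1 = K + (\<Delta>1 - K)"
    show ?thesis
    proof
      fix G assume "G \<in># \<Theta> + \<Delta>1"
      then have "G \<in># \<Theta> + (\<Delta>1 - K) \<or> G \<in># K" using a3
        by (metis union_iff)
      then show "eval w G" using a1 a2 by blast
    qed
  qed
  moreover have "\<not> eval w X"
  proof -
    have "\<forall>a\<in>#atom_occs X. a \<notin> S"
    proof (intro ballI notI)
      fix a assume a: "a \<in># atom_occs X" "a \<in> S"
      then obtain D where D: "D \<in># K" "a = head D" unfolding S_def by blast
      then show False using H a(1) by auto
    qed
    then show ?thesis using agree v2 by blast
  qed
  ultimately show False using val unfolding sval_def by blast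
qed


fun fsz :: "fm \<Rightarrow> nat" where
  "fsz (Atom p) = 1"
| "fsz (A \<^bold>\<rightarrow> B) = fsz A + fsz B + 1"

definition msz :: "fm multiset \<Rightarrow> fm \<Rightarrow> nat" where
  "msz \<Gamma> X = sum_mset (image_mset fsz \<Gamma>) + fsz X"

lemma ssz_mono: "M \<subseteq># N \<Longrightarrow> sum_mset (image_mset fsz M) \<le> sum_mset (image_mset fsz N)"
proof -
  assume "M \<subseteq># N"
  then have "N = M + (N - M)" by simp
  then have "sum_mset (image_mset fsz N) = sum_mset (image_mset fsz M) + sum_mset (image_mset fsz (N - M))"
    by (metis image_mset_union sum_mset.union)
  then show ?thesis by simp
qed

lemma binseq_mono: "binseq \<Gamma> X \<Longrightarrow> occs \<Gamma>' + atom_occs X' \<subseteq># occs \<Gamma> + atom_occs X \<Longrightarrow> binseq \<Gamma>' X'"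
  unfolding binseq_def by (meson mset_subset_eq_count order_trans)

lemma ms1: "I = \<Delta>1 \<inter># \<Delta>2 \<Longrightarrow> D \<in># I \<Longrightarrow> \<Delta>1 \<subseteq># \<Delta> \<Longrightarrow> \<Delta>2 \<subseteq># \<Delta> \<Longrightarrow>
   add_mset D ((\<Delta>1 - I) + (\<Delta>2 - I)) \<subseteq># \<Delta>"
proof -
  assume a: "I = \<Delta>1 \<inter># \<Delta>2" "D \<in># I" "\<Delta>1 \<subseteq># \<Delta>" "\<Delta>2 \<subseteq># \<Delta>"
  show ?thesis unfolding subseteq_mset_def
  proof
    fix x
    have c: "count \<Delta>1 x \<le> count \<Delta> x" "count \<Delta>2 x \<le> count \<Delta> x" using a(3,4) by (auto simp: subseteq_mset_def)
    have "D \<in># \<Delta>1" "D \<in># \<Delta>2" using a(1,2) by auto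
    then have d: "1 \<le> count \<Delta>1 D" "1 \<le> count \<Delta>2 D" by (simp_all add: Suc_le_eq)
    show "count (add_mset D (\<Delta>1 - I + (\<Delta>2 - I))) x \<le> count \<Delta> x"
      using c d a(1) by (cases "x = D"; simp; linarith)
  qed
qed

lemma ms2: "K \<subseteq># I \<Longrightarrow> I \<subseteq># \<Delta>1 \<Longrightarrow> \<Delta>1 \<subseteq># \<Delta> \<Longrightarrow> D \<in># K \<Longrightarrow> add_mset D ((I - K) + (\<Delta>1 - I)) \<subseteq># \<Delta>"
proof -
  assume a: "K \<subseteq># I" "I \<subseteq># \<Delta>1" "\<Delta>1 \<subseteq># \<Delta>" "D \<in># K"
  show ?thesis unfolding subseteq_mset_def
  proof
    fix x
    have c: "count K x \<le> count I x" "count I x \<le> count \<Delta>1 x" "count \<Delta>1 x \<le> count \<Delta> x"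
      using a(1-3) by (auto simp: subseteq_mset_def)
    have d: "1 \<le> count K D" using a(4) by (metis One_nat_def Suc_leI count_greater_zero_iff)
    show "count (add_mset D ((I - K) + (\<Delta>1 - I))) x \<le> count \<Delta> x"
      using c d by (cases "x = D"; simp; linarith)
  qed
qed

lemma ms3: "K \<subseteq># I \<Longrightarrow> I \<subseteq># \<Delta>2 \<Longrightarrow> \<Delta>2 - K = (\<Delta>2 - I) + (I - K)"
  by (simp add: multiset_eq_iff subseteq_mset_def)

lemma ms4: "M \<inter># N = {#} \<Longrightarrow> M \<subseteq># \<Delta> \<Longrightarrow> N \<subseteq># \<Delta> \<Longrightarrow> M + N \<subseteq># \<Delta>"
proof -
  assume a: "M \<inter># N = {#}" "M \<subseteq># \<Delta>" "N \<subseteq># \<Delta>"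
  show ?thesis unfolding subseteq_mset_def
  proof
    fix x
    have "min (count M x) (count N x) = 0" using a(1) by (metis count_empty count_inter_mset)
    moreover have "count M x \<le> count \<Delta> x" "count N x \<le> count \<Delta> x" using a(2,3) by (auto simp: subseteq_mset_def)
    ultimately show "count (M + N) x \<le> count \<Delta> x" by auto
  qed
qed

lemma three: "\<forall>a. count F a \<le> 2 \<Longrightarrow> P + Q + R \<subseteq># F \<Longrightarrow> h \<in># P \<Longrightarrow> h \<in># Q \<Longrightarrow> h \<in># R \<Longrightarrow> False"
proof -
  assume a: "\<forall>a. count F a \<le> 2" "P + Q + R \<subseteq># F" "h \<in># P" "h \<in># Q" "h \<in># R"
  have "count (P + Q + R) h \<le> count F h" by (rule mset_subset_eq_count[OF a(2)])
  moreover have "count P h \<ge> 1" "count Q h \<ge> 1" "count R h \<ge> 1" using a(3-5)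
    by (metis One_nat_def Suc_leI count_greater_zero_iff)+
  moreover have "count F h \<le> 2" using a(1) by blast
  ultimately show False by simp
qed


lemma complete: "binseq \<Gamma> X \<Longrightarrow> sval \<Gamma> X \<Longrightarrow> CL7 \<Gamma> X"
proof (induction "msz \<Gamma> X" arbitrary: \<Gamma> X rule: less_induct)
  case less
  show ?case
  proof (cases X)
    case (Imp A B)
    have b: "binseq (add_mset A \<Gamma>) B" using less(2) Imp by (simp add: binseq_def ac_simps)
    have s: "sval (add_mset A \<Gamma>) B" using less(3) Imp by (auto simp: sval_def)
    have "msz (add_mset A \<Gamma>) B < msz \<Gamma> X" using Imp by (simp add: msz_def)
    then have "CL7 (add_mset A \<Gamma>) B" using less(1) b s by blast
    then show ?thesis using Imp CL7.ImpR by simp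
  next
    case (Atom p)
    show ?thesis
    proof (cases "Atom p \<in># \<Gamma>")
      case True
      then have "\<Gamma> = add_mset (Atom p) (\<Gamma> - {#Atom p#})" by simp
      then show ?thesis using Atom CL7.Ax by metis
    next
      case False
      have "\<exists>C\<in>#\<Gamma>. head C = p"
      proof (rule ccontr)
        assume n: "\<not> ?thesis"
        define v where "v = (\<lambda>a. a \<noteq> p)"
        have "\<forall>G\<in>#\<Gamma>. eval v G"
        proof
          fix G assume "G \<in># \<Gamma>"
          then have "v (head G)" using n unfolding v_def by blast
          then show "eval v G" by (rule head_true)
        qed
        then have "eval v X" using less(3) unfolding sval_def by blast
        then show False using Atom unfolding v_def by simp
      qed
      then obtain C where C: "C \<in># \<Gamma>" "head C = p" by blast
      then obtain A C' where AC: "C = A \<^bold>\<rightarrow> C'" using False by (cases C) auto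
      have hC': "head C' = p" using C AC by simp
      define \<Delta> where "\<Delta> = \<Gamma> - {#C#}"
      have G\<Delta>: "\<Gamma> = add_mset C \<Delta>" using C \<Delta>_def by simp
      define Fl where "Fl = atom_occs A + atom_occs C' + occs \<Delta> + {#p#}"
      have occsG: "occs \<Gamma> + atom_occs X = Fl" using G\<Delta> AC Atom by (simp add: Fl_def add.assoc add.left_commute)
      have binF: "\<forall>a. count Fl a \<le> 2" using less(2) occsG unfolding binseq_def by metis
      have "p \<in># atom_occs C'" using head_in[of C'] hC' by simp
      then have cC: "count (atom_occs C') p \<ge> 1" by (simp add: Suc_le_eq)
      have "count Fl p \<le> 2" using binF by blast
      then have "count (atom_occs A) p + count (atom_occs C') p + count (occs \<Delta>) p + 1 \<le> 2"
        unfolding Fl_def by simp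
      with cC have "count (atom_occs A) p = 0" "count (occs \<Delta>) p = 0" by linarith+
      then have pA: "p \<notin># atom_occs A" and p\<Delta>: "p \<notin># occs \<Delta>" by (simp_all add: not_in_iff)
      have sA: "sval \<Delta> A"
        unfolding sval_def
      proof (intro allI impI)
        fix v assume v\<Delta>: "\<forall>G\<in>#\<Delta>. eval v G"
        show "eval v A"
        proof (rule ccontr)
          assume nA: "\<not> eval v A"
          define w where "w = v(p := False)"
          have agr: "eval w G = eval v G" if "p \<notin># atom_occs G" for G
          proof (rule eval_agree)
            show "\<forall>a\<in>#atom_occs G. w a = v a" using that unfolding w_def by auto
          qed
          have "\<forall>G\<in>#\<Delta>. eval w G"
          proof
            fix G assume G: "G \<in># \<Delta>"
            then have "p \<notin># atom_occs G" using p\<Delta> occs_mem by blast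
            then show "eval w G" using agr v\<Delta> G by blast
          qed
          moreover have "\<not> eval w A" using agr pA nA by simp
          ultimately have "\<forall>G\<in>#\<Gamma>. eval w G" using G\<Delta> AC by simp
          then have "eval w X" using less(3) unfolding sval_def by blast
          then show False using Atom w_def by simp
        qed
      qed
      have sC: "sval ({#C'#} + \<Delta>) (Atom p)"
        unfolding sval_def
      proof (intro allI impI)
        fix v assume "\<forall>G\<in>#{#C'#} + \<Delta>. eval v G"
        then have "\<forall>G\<in>#\<Gamma>. eval v G" using G\<Delta> AC by simp
        then show "eval v (Atom p)" using less(3) Atom unfolding sval_def by blast
      qed
      have sA': "sval ({#} + \<Delta>) A" using sA by simp
      obtain \<Delta>1 where D1: "\<Delta>1 \<subseteq># \<Delta>" "sval ({#} + \<Delta>1) A" "\<forall>N'. N' \<subset># \<Delta>1 \<longrightarrow> \<not> sval ({#} + N') A"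
        using exists_minimal[of "\<lambda>N. sval ({#} + N) A" \<Delta>, OF sA'] by blast
      obtain \<Delta>2 where D2: "\<Delta>2 \<subseteq># \<Delta>" "sval ({#C'#} + \<Delta>2) (Atom p)"
          "\<forall>N'. N' \<subset># \<Delta>2 \<longrightarrow> \<not> sval ({#C'#} + N') (Atom p)"
        using exists_minimal[of "\<lambda>N. sval ({#C'#} + N) (Atom p)" \<Delta>, OF sC] by blast
      have disj: "\<Delta>1 \<inter># \<Delta>2 = {#}"
      proof (rule ccontr)
        define I where "I = \<Delta>1 \<inter># \<Delta>2"
        assume "\<Delta>1 \<inter># \<Delta>2 \<noteq> {#}"
        then have I0: "I \<noteq> {#}" using I_def by simp
        have I1: "I \<subseteq># \<Delta>1" "I \<subseteq># \<Delta>2" unfolding I_def by auto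
        obtain D0 where D0: "D0 \<in># I" "head D0 \<in># occs ({#} + (\<Delta>1 - I)) + atom_occs A"
          using minimal_heads[OF D1(2) D1(3) I1(1) I0] by blast
        define K where "K = filter_mset (\<lambda>D. head D \<in># occs (\<Delta>1 - I) + atom_occs A) I"
        have "D0 \<in># K" using D0 unfolding K_def by simp
        then have K0: "K \<noteq> {#}" by auto
        have KI: "K \<subseteq># I" unfolding K_def by simp
        have KD2: "K \<subseteq># \<Delta>2" by (rule subset_mset.order_trans[OF KI I1(2)])
        obtain D where D: "D \<in># K" "head D \<in># occs ({#C'#} + (\<Delta>2 - K)) + atom_occs (Atom p)"
          using minimal_heads[OF D2(2) D2(3) KD2 K0] by blast
        have DI: "D \<in># I" by (rule mset_subset_eqD[OF KI D(1)])
        have h1: "head D \<in># occs (\<Delta>1 - I) + atom_occs A" using D(1) unfolding K_def by simp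
        have h0: "head D \<in># atom_occs D" by (rule head_in)
        have e: "\<Delta>2 - K = (\<Delta>2 - I) + (I - K)" by (rule ms3[OF KI I1(2)])
        from D(2) e have "head D \<in># occs (\<Delta>2 - I) + atom_occs C' + {#p#} \<or> head D \<in># occs (I - K)"
          by auto
        then show False
        proof
          assume h2: "head D \<in># occs (\<Delta>2 - I) + atom_occs C' + {#p#}"
          have "add_mset D ((\<Delta>1 - I) + (\<Delta>2 - I)) \<subseteq># \<Delta>" by (rule ms1[OF I_def DI D1(1) D2(1)])
          then have sb: "occs (add_mset D ((\<Delta>1 - I) + (\<Delta>2 - I))) \<subseteq># occs \<Delta>" by (rule occs_mono)
          have "atom_occs D + (occs (\<Delta>1 - I) + atom_occs A) + (occs (\<Delta>2 - I) + atom_occs C' + {#p#}) \<subseteq># Fl"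
          proof (rule mset_subset_eqI)
            fix a
            have "count (occs (add_mset D ((\<Delta>1 - I) + (\<Delta>2 - I)))) a \<le> count (occs \<Delta>) a"
              by (rule mset_subset_eq_count[OF sb])
            then show "count (atom_occs D + (occs (\<Delta>1 - I) + atom_occs A) + (occs (\<Delta>2 - I) + atom_occs C' + {#p#})) a \<le> count Fl a"
              unfolding Fl_def by simp
          qed
          from three[OF binF this h0 h1 h2] show False .
        next
          assume h2: "head D \<in># occs (I - K)"
          have "add_mset D ((I - K) + (\<Delta>1 - I)) \<subseteq># \<Delta>" by (rule ms2[OF KI I1(1) D1(1) D(1)])
          then have sb: "occs (add_mset D ((I - K) + (\<Delta>1 - I))) \<subseteq># occs \<Delta>" by (rule occs_mono)
          have "atom_occs D + occs (I - K) + (occs (\<Delta>1 - I) + atom_occs A) \<subseteq># Fl"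
          proof (rule mset_subset_eqI)
            fix a
            have "count (occs (add_mset D ((I - K) + (\<Delta>1 - I)))) a \<le> count (occs \<Delta>) a"
              by (rule mset_subset_eq_count[OF sb])
            then show "count (atom_occs D + occs (I - K) + (occs (\<Delta>1 - I) + atom_occs A)) a \<le> count Fl a"
              unfolding Fl_def by simp
          qed
          from three[OF binF this h0 h2 h1] show False .
        qed
      qed
      have sub12: "\<Delta>1 + \<Delta>2 \<subseteq># \<Delta>" by (rule ms4[OF disj D1(1) D2(1)])
      have o1: "occs \<Delta>1 \<subseteq># occs \<Delta>" "occs \<Delta>2 \<subseteq># occs \<Delta>" using D1(1) D2(1) occs_mono by auto
      have s1: "sum_mset (image_mset fsz \<Delta>1) \<le> sum_mset (image_mset fsz \<Delta>)"
        "sum_mset (image_mset fsz \<Delta>2) \<le> sum_mset (image_mset fsz \<Delta>)" using D1(1) D2(1) ssz_mono by auto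
      have "binseq \<Delta>1 A"
      proof (rule binseq_mono[OF less(2)])
        show "occs \<Delta>1 + atom_occs A \<subseteq># occs \<Gamma> + atom_occs X" unfolding occsG
        proof (rule mset_subset_eqI)
          fix a
          have "count (occs \<Delta>1) a \<le> count (occs \<Delta>) a" by (rule mset_subset_eq_count[OF o1(1)])
          then show "count (occs \<Delta>1 + atom_occs A) a \<le> count Fl a" unfolding Fl_def by simp
        qed
      qed
      moreover have "msz \<Delta>1 A < msz \<Gamma> X" using s1 G\<Delta> AC Atom by (simp add: msz_def)
      moreover have "sval \<Delta>1 A" using D1(2) by simp
      ultimately have c1: "CL7 \<Delta>1 A" using less(1) by blast
      have "binseq (add_mset C' \<Delta>2) (Atom p)"
      proof (rule binseq_mono[OF less(2)])
        show "occs (add_mset C' \<Delta>2) + atom_occs (Atom p) \<subseteq># occs \<Gamma> + atom_occs X" unfolding occsG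
        proof (rule mset_subset_eqI)
          fix a
          have "count (occs \<Delta>2) a \<le> count (occs \<Delta>) a" by (rule mset_subset_eq_count[OF o1(2)])
          then show "count (occs (add_mset C' \<Delta>2) + atom_occs (Atom p)) a \<le> count Fl a" unfolding Fl_def by simp
        qed
      qed
      moreover have "msz (add_mset C' \<Delta>2) (Atom p) < msz \<Gamma> X" using s1 G\<Delta> AC Atom by (simp add: msz_def)
      moreover have "sval (add_mset C' \<Delta>2) (Atom p)" using D2(2) by simp
      ultimately have c2: "CL7 (add_mset C' \<Delta>2) (Atom p)" using less(1) by blast
      have "CL7 (add_mset (A \<^bold>\<rightarrow> C') (\<Delta>2 + \<Delta>1)) (Atom p)" using CL7.ImpL[OF c2 c1] .
      then have "CL7 (add_mset (A \<^bold>\<rightarrow> C') (\<Delta>2 + \<Delta>1) + (\<Delta> - (\<Delta>1 + \<Delta>2))) (Atom p)" by (rule weaken)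
      moreover have "add_mset (A \<^bold>\<rightarrow> C') (\<Delta>2 + \<Delta>1) + (\<Delta> - (\<Delta>1 + \<Delta>2)) = \<Gamma>"
        using sub12 G\<Delta> AC by (simp add: add.commute subset_mset.add_diff_inverse)
      ultimately show ?thesis using Atom by simp
    qed
  qed
qed


lemma subst_subst: "subst \<sigma> (subst \<tau> A) = subst (\<lambda>n. subst \<sigma> (\<tau> n)) A"
  by (induction A) auto

lemma occs_ren: "atom_occs (subst (\<lambda>n. Atom (f n)) A) = image_mset f (atom_occs A)"
  by (induction A) auto

lemma occs_image_ren: "occs (image_mset (subst (\<lambda>n. Atom (f n))) M) = image_mset f (occs M)"
  by (induction M) (auto simp: occs_ren)

lemma occs_atoms: "occs (mset (map (\<lambda>i. Atom (Suc i)) xs)) = mset (map Suc xs)"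
  by (induction xs) auto

lemma count_even: "count (image_mset (\<lambda>n::nat. 2 * n) P) (a::nat) = (if even a then count P (a div 2) else 0)"
proof (induction P)
  case empty then show ?case by simp
next
  case (add x P)
  have "(a = 2 * x) = (even a \<and> x = a div 2)" by auto
  then show ?case using add by auto
qed

lemma count_odd: "count (image_mset (\<lambda>n::nat. 2 * n + 1) P) (a::nat) = (if odd a then count P (a div 2) else 0)"
proof (induction P)
  case empty then show ?case by simp
next
  case (add x P)
  have "(a = 2 * x + 1) = (odd a \<and> x = a div 2)" by presburger
  then show ?case using add by auto
qed

lemma generic: "CL7 \<Gamma> X \<Longrightarrow> \<exists>\<Gamma>' X' \<sigma>. CL7 \<Gamma>' X' \<and> image_mset (subst \<sigma>) \<Gamma>' = \<Gamma> \<and> subst \<sigma> X' = X \<and> binseq \<Gamma>' X'"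
proof (induction rule: CL7.induct)
  case (Ax F \<Gamma>)
  obtain xs where xs: "mset xs = \<Gamma>" using ex_mset by blast
  define \<Gamma>0 where "\<Gamma>0 = mset (map (\<lambda>i. Atom (Suc i)) [0..<length xs])"
  define \<sigma> where "\<sigma> = (\<lambda>i. if i = 0 then F else xs ! (i - 1))"
  have c: "CL7 (add_mset (Atom 0) \<Gamma>0) (Atom 0)" by (rule CL7.Ax)
  have "map (subst \<sigma> \<circ> (\<lambda>i. Atom (Suc i))) [0..<length xs] = map (\<lambda>i. xs ! i) [0..<length xs]"
    by (simp add: \<sigma>_def)
  also have "\<dots> = xs" by (rule map_nth)
  finally have im: "image_mset (subst \<sigma>) \<Gamma>0 = \<Gamma>" unfolding \<Gamma>0_def using xs
    by (metis mset_map map_map)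
  have b: "binseq (add_mset (Atom 0) \<Gamma>0) (Atom 0)"
    unfolding binseq_def
  proof
    fix a
    have d: "distinct (map Suc [0..<length xs])" by (simp add: distinct_map)
    have oa: "occs \<Gamma>0 = mset (map Suc [0..<length xs])" unfolding \<Gamma>0_def by (rule occs_atoms)
    have c1: "count (occs \<Gamma>0) a \<le> 1"
      using d unfolding oa distinct_count_atmost_1 by (metis order.refl zero_le_one)
    moreover have c0: "count (occs \<Gamma>0) 0 = 0" unfolding oa by (auto simp: count_eq_zero_iff)
    ultimately show "count (occs (add_mset (Atom 0) \<Gamma>0) + atom_occs (Atom 0)) a \<le> 2"
      by (cases "a = 0") auto
  qed
  have "image_mset (subst \<sigma>) (add_mset (Atom 0) \<Gamma>0) = add_mset F \<Gamma>" "subst \<sigma> (Atom 0) = F"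
    using im by (auto simp: \<sigma>_def)
  then show ?case using c b by blast
next
  case (ImpR E \<Gamma> F)
  then obtain \<Gamma>1 X1 \<sigma> where h: "CL7 \<Gamma>1 X1" "image_mset (subst \<sigma>) \<Gamma>1 = add_mset E \<Gamma>"
    "subst \<sigma> X1 = F" "binseq \<Gamma>1 X1" by blast
  obtain M1 E1 where m: "\<Gamma>1 = add_mset E1 M1" "subst \<sigma> E1 = E" "image_mset (subst \<sigma>) M1 = \<Gamma>"
    using msed_map_invR[OF h(2)] by blast
  have "CL7 M1 (E1 \<^bold>\<rightarrow> X1)" using h(1) m(1) CL7.ImpR by simp
  moreover have "binseq M1 (E1 \<^bold>\<rightarrow> X1)" using h(4) m(1) by (simp add: binseq_def add.assoc add.left_commute)
  ultimately show ?case using m h(3) by fastforce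
next
  case (ImpL F \<Gamma> G \<Delta> E)
  then obtain \<Gamma>1 X1 \<sigma>1 where h: "CL7 \<Gamma>1 X1" "image_mset (subst \<sigma>1) \<Gamma>1 = add_mset F \<Gamma>"
    "subst \<sigma>1 X1 = G" "binseq \<Gamma>1 X1" by blast
  obtain M1 F1 where m: "\<Gamma>1 = add_mset F1 M1" "subst \<sigma>1 F1 = F" "image_mset (subst \<sigma>1) M1 = \<Gamma>"
    using msed_map_invR[OF h(2)] by blast
  obtain \<Delta>2 E2 \<sigma>2 where h2: "CL7 \<Delta>2 E2" "image_mset (subst \<sigma>2) \<Delta>2 = \<Delta>"
    "subst \<sigma>2 E2 = E" "binseq \<Delta>2 E2" using ImpL by blast
  define r1 where "r1 = subst (\<lambda>n. Atom (2 * n))"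
  define r2 where "r2 = subst (\<lambda>n. Atom (2 * n + 1))"
  define \<sigma> where "\<sigma> = (\<lambda>n. if even n then \<sigma>1 (n div 2) else \<sigma>2 (n div 2))"
  have s1: "subst \<sigma> (r1 A) = subst \<sigma>1 A" for A
    unfolding r1_def subst_subst by (simp add: \<sigma>_def)
  have s2: "subst \<sigma> (r2 A) = subst \<sigma>2 A" for A
    unfolding r2_def subst_subst by (simp add: \<sigma>_def)
  have c1: "CL7 (add_mset (r1 F1) (image_mset r1 M1)) (r1 X1)"
    using subst_closed[OF h(1), of "\<lambda>n. Atom (2 * n)"] m(1) unfolding r1_def by simp
  have c2: "CL7 (image_mset r2 \<Delta>2) (r2 E2)"
    using subst_closed[OF h2(1), of "\<lambda>n. Atom (2 * n + 1)"] unfolding r2_def by simp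
  have c: "CL7 (add_mset (r2 E2 \<^bold>\<rightarrow> r1 F1) (image_mset r1 M1 + image_mset r2 \<Delta>2)) (r1 X1)"
    by (rule CL7.ImpL[OF c1 c2])
  have i1: "image_mset (subst \<sigma>) (image_mset r1 M1) = \<Gamma>"
    using m(3) by (simp add: image_mset.compositionality comp_def s1)
  have i2: "image_mset (subst \<sigma>) (image_mset r2 \<Delta>2) = \<Delta>"
    using h2(2) by (simp add: image_mset.compositionality comp_def s2)
  have im: "image_mset (subst \<sigma>) (add_mset (r2 E2 \<^bold>\<rightarrow> r1 F1) (image_mset r1 M1 + image_mset r2 \<Delta>2))
      = add_mset (E \<^bold>\<rightarrow> F) (\<Gamma> + \<Delta>)"
    using i1 i2 s1 s2 m(2) h2(3) by simp
  have sx: "subst \<sigma> (r1 X1) = G" using s1 h(3) by simp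
  have oc: "occs (add_mset (r2 E2 \<^bold>\<rightarrow> r1 F1) (image_mset r1 M1 + image_mset r2 \<Delta>2)) + atom_occs (r1 X1)
     = image_mset (\<lambda>n. 2 * n) (occs \<Gamma>1 + atom_occs X1) + image_mset (\<lambda>n. 2 * n + 1) (occs \<Delta>2 + atom_occs E2)"
    unfolding r1_def r2_def using m(1) by (simp add: occs_ren occs_image_ren add.assoc add.left_commute add.commute)
  have b: "binseq (add_mset (r2 E2 \<^bold>\<rightarrow> r1 F1) (image_mset r1 M1 + image_mset r2 \<Delta>2)) (r1 X1)"
    unfolding binseq_def oc
  proof
    fix a
    show "count (image_mset (\<lambda>n. 2 * n) (occs \<Gamma>1 + atom_occs X1) + image_mset (\<lambda>n. 2 * n + 1) (occs \<Delta>2 + atom_occs E2)) a \<le> 2"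
      using h(4) h2(4) unfolding binseq_def count_union count_even count_odd by auto
  qed
  show ?case using c im sx b by blast
qed

theorem theorem2p1:
  fixes H :: fm
  shows "provable_CL7 H \<longleftrightarrow> (\<exists>F. binary F \<and> tautology F \<and> subst_instance H F)"
proof
  assume "provable_CL7 H"
  then have "CL7 {#} H" by (simp add: provable_CL7_def)
  then obtain \<Gamma>' X' \<sigma> where g: "CL7 \<Gamma>' X'" "image_mset (subst \<sigma>) \<Gamma>' = {#}" "subst \<sigma> X' = H" "binseq \<Gamma>' X'"
    using generic by blast
  then have e: "\<Gamma>' = {#}" by simp
  have "binary X'" using g(4) e by (simp add: binseq_def binary_def)
  moreover have "tautology X'" using soundness[OF g(1)] e by (simp add: sval_def tautology_def)
  moreover have "subst_instance H X'" using g(3) by (auto simp: subst_instance_def)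
  ultimately show "\<exists>F. binary F \<and> tautology F \<and> subst_instance H F" by blast
next
  assume "\<exists>F. binary F \<and> tautology F \<and> subst_instance H F"
  then obtain F \<sigma> where F: "binary F" "tautology F" "H = subst \<sigma> F"
    by (auto simp: subst_instance_def)
  have "binseq {#} F" using F(1) by (simp add: binseq_def binary_def)
  moreover have "sval {#} F" using F(2) by (simp add: sval_def tautology_def)
  ultimately have "CL7 {#} F" by (rule complete)
  from subst_closed[OF this, of \<sigma>] have "CL7 {#} H" using F(3) by simp
  then show "provable_CL7 H" by (simp add: provable_CL7_def)
qed

end
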